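(* Let $X$ be an object of a double complex in a well-powered abelian category. (a) If any one of the $L$-homologies ${}^{h}X_\wedge,\ {}^{h}X_d,\ {}^{\vee}X_d,\ {}^{\vee}X_h,\ {}^{d}X_h,\ {}^{d}X_\wedge,\ X_d$ is trivial, then $X_h$ is trivial. (b) If any one of the $L$-homologies ${}^{v}X_\wedge,\ {}^{v}X_d,\ {}^{\vee}X_d,\ {}^{\vee}X_v,\ {}^{d}X_v,\ {}^{d}X_\wedge,\ X_d$ is trivial, then $X_v$ is trivial. (c) If $X_d$ is trivial, then every $L$-homology of $X$ is trivial.
   Context: A double complex in a well-powered abelian category consists of objects $X_{i,j}$ ($i,j\in\mathbb Z$), horizontal morphisms $X_{i,j}\to X_{i+1,j}$ and vertical morphisms $X_{i,j}\to X_{i,j+1}$ such that consecutive horizontal morphisms compose to $0$, consecutive vertical morphisms compose to $0$, and every square commutes. For $X=X_{i,j}$ write $h^{\rm in}_X, h^{\rm out}_X$ for the horizontal morphisms into and out of $X$, $v^{\rm in}_X,v^{\rm out}_X$ for the vertical ones, and $\delta^{\rm in}_X\colon X_{i-1,j-1}\to X$, $\delta^{\rm out}_X\colon X\to X_{i+1,j+1}$ for the diagonal composites. Set $\mathsf K^h=\operatorname{Ker}h^{\rm out}_X$, $\mathsf K^v=\operatorname{Ker}v^{\rm out}_X$, $\mathsf K^d=\operatorname{Ker}\delta^{\rm out}_X$, $\mathsf I^h=\operatorname{Im}h^{\rm in}_X$, $\mathsf I^v=\operatorname{Im}v^{\rm in}_X$, $\mathsf I^d=\operatorname{Im}\delta^{\rm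 in}_X$. An $L$-homology of $X$ is a pair $(U,V)$ with $U$ in the sublattice generated by $\mathsf K^h,\mathsf K^v,\mathsf K^d$, $V$ in the sublattice generated by $\mathsf I^h,\mathsf I^v,\mathsf I^d$, and $V\le U$; it is written $U/V$ and called trivial if the quotient $U/V$ is a zero object (i.e. $U=V$). Named $L$-homologies: $X_h=\mathsf K^h/\mathsf I^h$, $X_v=\mathsf K^v/\mathsf I^v$, $X_d=\mathsf K^d/\mathsf I^d$, ${}^{\vee}X_h=(\mathsf K^h\vee\mathsf K^v)/\mathsf I^h$, ${}^{d}X_h=\mathsf K^d/\mathsf I^h$, ${}^{\vee}X_v=(\mathsf K^h\vee\mathsf K^v)/\mathsf I^v$, ${}^{d}X_v=\mathsf K^d/\mathsf I^v$, ${}^{h}X_d=\mathsf K^h/\mathsf I^d$, ${}^{v}X_d=\mathsf K^v/\mathsf I^d$, ${}^{\vee}X_d=(\mathsf K^h\vee\mathsf K^v)/\mathsf I^d$, ${}^{h}X_\wedge=\mathsf K^h/(\mathsf I^h\wedge\mathsf I^v)$, ${}^{v}X_\wedge=\mathsf K^v/(\mathsf I^h\wedge\mathsf I^v)$, ${}^{d}X_\wedge=\mathsf K^d/(\mathsf I^h\wedge\mathsf I^v)$. *)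

theory Defs
  imports Main
begin

record ('o, 'm) cat =
  Dom  :: "'m \<Rightarrow> 'o"
  Cod  :: "'m \<Rightarrow> 'o"
  Comp :: "'m \<Rightarrow> 'm \<Rightarrow> 'm"   (* Comp C g f = g o f, meaningful when Cod f = Dom g *)
  Idm  :: "'o \<Rightarrow> 'm"

definition category :: "('o, 'm) cat \<Rightarrow> bool" where
  "category C \<longleftrightarrow>
     (\<forall>f g. Cod C f = Dom C g \<longrightarrow>
        Dom C (Comp C g f) = Dom C f \<and> Cod C (Comp C g f) = Cod C g) \<and>
     (\<forall>f g k. Cod C f = Dom C g \<longrightarrow> Cod C g = Dom C k \<longrightarrow>
        Comp C k (Comp C g f) = Comp C (Comp C k g) f) \<and>
     (\<forall>A. Dom C (Idm C A) = A \<and> Cod C (Idm C A) = A) \<and>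
     (\<forall>f. Comp C (Idm C (Cod C f)) f = f \<and> Comp C f (Idm C (Dom C f)) = f)"

definition zero_obj :: "('o, 'm) cat \<Rightarrow> 'o \<Rightarrow> bool" where
  "zero_obj C Z \<longleftrightarrow>
     (\<forall>A. (\<exists>!f. Dom C f = A \<and> Cod C f = Z) \<and> (\<exists>!f. Dom C f = Z \<and> Cod C f = A))"

definition is_zero :: "('o, 'm) cat \<Rightarrow> 'm \<Rightarrow> bool" where
  "is_zero C f \<longleftrightarrow> (\<exists>Z a b. zero_obj C Z \<and> Dom C a = Dom C f \<and> Cod C a = Z \<and>
       Dom C b = Z \<and> Cod C b = Cod C f \<and> f = Comp C b a)"

definition mono :: "('o, 'm) cat \<Rightarrow> 'm \<Rightarrow> bool" where
  "mono C f \<longleftrightarrow> (\<forall>g k. Cod C g = Dom C f \<longrightarrow> Cod C k = Dom C f \<longrightarrow> Dom C g = Dom C k \<longrightarrow>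
       Comp C f g = Comp C f k \<longrightarrow> g = k)"

definition epi :: "('o, 'm) cat \<Rightarrow> 'm \<Rightarrow> bool" where
  "epi C f \<longleftrightarrow> (\<forall>g k. Dom C g = Cod C f \<longrightarrow> Dom C k = Cod C f \<longrightarrow> Cod C g = Cod C k \<longrightarrow>
       Comp C g f = Comp C k f \<longrightarrow> g = k)"

definition is_kernel :: "('o, 'm) cat \<Rightarrow> 'm \<Rightarrow> 'm \<Rightarrow> bool" where
  "is_kernel C f k \<longleftrightarrow> Cod C k = Dom C f \<and> is_zero C (Comp C f k) \<and>
     (\<forall>g. Cod C g = Dom C f \<and> is_zero C (Comp C f g) \<longrightarrow>
        (\<exists>!u. Dom C u = Dom C g \<and> Cod C u = Dom C k \<and> Comp C k u = g))"

definition is_cokernel :: "('o, 'm) cat \<Rightarrow> 'm \<Rightarrow> 'm \<Rightarrow> bool" where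
  "is_cokernel C f c \<longleftrightarrow> Dom C c = Cod C f \<and> is_zero C (Comp C c f) \<and>
     (\<forall>g. Dom C g = Cod C f \<and> is_zero C (Comp C g f) \<longrightarrow>
        (\<exists>!u. Dom C u = Cod C c \<and> Cod C u = Cod C g \<and> Comp C u c = g))"

definition is_product :: "('o, 'm) cat \<Rightarrow> 'o \<Rightarrow> 'o \<Rightarrow> 'o \<Rightarrow> 'm \<Rightarrow> 'm \<Rightarrow> bool" where
  "is_product C A B P p1 p2 \<longleftrightarrow>
     Dom C p1 = P \<and> Cod C p1 = A \<and> Dom C p2 = P \<and> Cod C p2 = B \<and>
     (\<forall>f g. Dom C f = Dom C g \<and> Cod C f = A \<and> Cod C g = B \<longrightarrow>
        (\<exists>!u. Dom C u = Dom C f \<and> Cod C u = P \<and> Comp C p1 u = f \<and> Comp C p2 u = g))"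

definition is_coproduct :: "('o, 'm) cat \<Rightarrow> 'o \<Rightarrow> 'o \<Rightarrow> 'o \<Rightarrow> 'm \<Rightarrow> 'm \<Rightarrow> bool" where
  "is_coproduct C A B S i1 i2 \<longleftrightarrow>
     Dom C i1 = A \<and> Cod C i1 = S \<and> Dom C i2 = B \<and> Cod C i2 = S \<and>
     (\<forall>f g. Cod C f = Cod C g \<and> Dom C f = A \<and> Dom C g = B \<longrightarrow>
        (\<exists>!u. Dom C u = S \<and> Cod C u = Cod C f \<and> Comp C u i1 = f \<and> Comp C u i2 = g))"

definition abelian :: "('o, 'm) cat \<Rightarrow> bool" where
  "abelian C \<longleftrightarrow> category C \<and> (\<exists>Z. zero_obj C Z) \<and>
     (\<forall>A B. \<exists>P p1 p2. is_product C A B P p1 p2) \<and>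
     (\<forall>A B. \<exists>S i1 i2. is_coproduct C A B S i1 i2) \<and>
     (\<forall>f. \<exists>k. is_kernel C f k) \<and> (\<forall>f. \<exists>c. is_cokernel C f c) \<and>
     (\<forall>m. mono C m \<longrightarrow> (\<exists>f. is_kernel C f m)) \<and>
     (\<forall>e. epi C e \<longrightarrow> (\<exists>f. is_cokernel C f e))"

definition sub_le :: "('o, 'm) cat \<Rightarrow> 'm \<Rightarrow> 'm \<Rightarrow> bool" where
  "sub_le C m n \<longleftrightarrow> mono C m \<and> mono C n \<and> Cod C m = Cod C n \<and>
     (\<exists>u. Dom C u = Dom C m \<and> Cod C u = Dom C n \<and> m = Comp C n u)"

definition sub_eq :: "('o, 'm) cat \<Rightarrow> 'm \<Rightarrow> 'm \<Rightarrow> bool" where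
  "sub_eq C m n \<longleftrightarrow> sub_le C m n \<and> sub_le C n m"

definition is_image :: "('o, 'm) cat \<Rightarrow> 'm \<Rightarrow> 'm \<Rightarrow> bool" where
  "is_image C f i \<longleftrightarrow> (\<exists>c. is_cokernel C f c \<and> is_kernel C c i)"

definition is_join :: "('o, 'm) cat \<Rightarrow> 'm \<Rightarrow> 'm \<Rightarrow> 'm \<Rightarrow> bool" where
  "is_join C a b j \<longleftrightarrow> sub_le C a j \<and> sub_le C b j \<and>
     (\<forall>c. sub_le C a c \<and> sub_le C b c \<longrightarrow> sub_le C j c)"

definition is_meet :: "('o, 'm) cat \<Rightarrow> 'm \<Rightarrow> 'm \<Rightarrow> 'm \<Rightarrow> bool" where
  "is_meet C a b j \<longleftrightarrow> sub_le C j a \<and> sub_le C j b \<and>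
     (\<forall>c. sub_le C c a \<and> sub_le C c b \<longrightarrow> sub_le C c j)"

text \<open>Sets of representatives of subobjects.\<close>
definition Ker_set :: "('o, 'm) cat \<Rightarrow> 'm \<Rightarrow> 'm set" where
  "Ker_set C f = {k. is_kernel C f k}"

definition Im_set :: "('o, 'm) cat \<Rightarrow> 'm \<Rightarrow> 'm set" where
  "Im_set C f = {i. is_image C f i}"

definition Join_set :: "('o, 'm) cat \<Rightarrow> 'm set \<Rightarrow> 'm set \<Rightarrow> 'm set" where
  "Join_set C A B = {j. \<exists>a\<in>A. \<exists>b\<in>B. is_join C a b j}"

definition Meet_set :: "('o, 'm) cat \<Rightarrow> 'm set \<Rightarrow> 'm set \<Rightarrow> 'm set" where
  "Meet_set C A B = {j. \<exists>a\<in>A. \<exists>b\<in>B. is_meet C a b j}"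

inductive_set sublat :: "('o, 'm) cat \<Rightarrow> 'm set \<Rightarrow> 'm set" for C G where
  gen: "a \<in> G \<Longrightarrow> a \<in> sublat C G"
| join: "a \<in> sublat C G \<Longrightarrow> b \<in> sublat C G \<Longrightarrow> is_join C a b c \<Longrightarrow> c \<in> sublat C G"
| meet: "a \<in> sublat C G \<Longrightarrow> b \<in> sublat C G \<Longrightarrow> is_meet C a b c \<Longrightarrow> c \<in> sublat C G"

definition double_complex ::
  "('o, 'm) cat \<Rightarrow> (int \<Rightarrow> int \<Rightarrow> 'o) \<Rightarrow> (int \<Rightarrow> int \<Rightarrow> 'm) \<Rightarrow> (int \<Rightarrow> int \<Rightarrow> 'm) \<Rightarrow> bool" where
  "double_complex C X h v \<longleftrightarrow> (\<forall>i j.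
     Dom C (h i j) = X i j \<and> Cod C (h i j) = X (i+1) j \<and>
     Dom C (v i j) = X i j \<and> Cod C (v i j) = X i (j+1) \<and>
     is_zero C (Comp C (h (i+1) j) (h i j)) \<and>
     is_zero C (Comp C (v i (j+1)) (v i j)) \<and>
     Comp C (v (i+1) j) (h i j) = Comp C (h i (j+1)) (v i j))"

definition Kh where "Kh C h v i j = Ker_set C (h i j)"
definition Kv where "Kv C h v i j = Ker_set C (v i j)"
definition Kd where "Kd C h v i j = Ker_set C (Comp C (v (i+1) j) (h i j))"
definition Ih where "Ih C h v i j = Im_set C (h (i-1) j)"
definition Iv where "Iv C h v i j = Im_set C (v i (j-1))"
definition Idg where "Idg C h v i j = Im_set C (Comp C (v i (j-1)) (h (i-1) (j-1)))"

text \<open>An L-homology U/V (given by representative sets) is trivial iff U = V as subobjects.\<close>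
definition L_trivial :: "('o, 'm) cat \<Rightarrow> 'm set \<Rightarrow> 'm set \<Rightarrow> bool" where
  "L_trivial C U V \<longleftrightarrow> (\<exists>u\<in>U. \<exists>w\<in>V. sub_eq C u w)"

definition L_homology :: "('o, 'm) cat \<Rightarrow> (int \<Rightarrow> int \<Rightarrow> 'm) \<Rightarrow> (int \<Rightarrow> int \<Rightarrow> 'm) \<Rightarrow>
    int \<Rightarrow> int \<Rightarrow> 'm \<Rightarrow> 'm \<Rightarrow> bool" where
  "L_homology C h v i j U V \<longleftrightarrow>
     U \<in> sublat C (Kh C h v i j \<union> Kv C h v i j \<union> Kd C h v i j) \<and>
     V \<in> sublat C (Ih C h v i j \<union> Iv C h v i j \<union> Idg C h v i j) \<and>
     sub_le C V U"

end

theory Submission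
  imports Defs
begin


lemma cat_dom: "category C \<Longrightarrow> Cod C f = Dom C g \<Longrightarrow> Dom C (Comp C g f) = Dom C f"
  unfolding category_def by blast
lemma cat_cod: "category C \<Longrightarrow> Cod C f = Dom C g \<Longrightarrow> Cod C (Comp C g f) = Cod C g"
  unfolding category_def by blast
lemma cat_assoc: "category C \<Longrightarrow> Cod C f = Dom C g \<Longrightarrow> Cod C g = Dom C k \<Longrightarrow>
   Comp C k (Comp C g f) = Comp C (Comp C k g) f"
  unfolding category_def by blast

lemma zero_right: assumes c: "category C" and z: "is_zero C f" and "Cod C g = Dom C f"
  shows "is_zero C (Comp C f g)"
proof -
  obtain Z a b where ab: "zero_obj C Z" "Dom C a = Dom C f" "Cod C a = Z" "Dom C b = Z"
    "Cod C b = Cod C f" "f = Comp C b a" using z unfolding is_zero_def by blast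
  have "Comp C f g = Comp C b (Comp C a g)" using cat_assoc[OF c, of g a b] ab assms(3) by simp
  moreover have "Dom C (Comp C a g) = Dom C (Comp C f g)"
    using cat_dom[OF c] ab assms(3) by simp
  moreover have "Cod C (Comp C a g) = Z" using cat_cod[OF c] ab assms(3) by simp
  moreover have "Cod C (Comp C f g) = Cod C b" using cat_cod[OF c] ab assms(3) by simp
  ultimately have X: "Comp C f g = Comp C b (Comp C a g)" "Dom C (Comp C a g) = Dom C (Comp C f g)"
    "Cod C (Comp C a g) = Z" "Cod C (Comp C f g) = Cod C b" .
  show ?thesis unfolding is_zero_def
    by (rule exI[of _ Z], rule exI[of _ "Comp C a g"], rule exI[of _ b]) (use X ab(1,3,4,5) in auto)
qed

lemma zero_left: assumes c: "category C" and z: "is_zero C f" and "Dom C g = Cod C f"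
  shows "is_zero C (Comp C g f)"
proof -
  obtain Z a b where ab: "zero_obj C Z" "Dom C a = Dom C f" "Cod C a = Z" "Dom C b = Z"
    "Cod C b = Cod C f" "f = Comp C b a" using z unfolding is_zero_def by blast
  have "Comp C g f = Comp C (Comp C g b) a" using cat_assoc[OF c, of a b g] ab assms(3) by simp
  moreover have "Dom C (Comp C g b) = Z" using cat_dom[OF c] ab assms(3) by simp
  moreover have "Cod C (Comp C g b) = Cod C (Comp C g f)" using cat_cod[OF c] ab assms(3) by simp
  moreover have "Dom C (Comp C g f) = Dom C a" using cat_dom[OF c] ab assms(3) by simp
  ultimately have X: "Comp C g f = Comp C (Comp C g b) a" "Dom C (Comp C g b) = Z"
    "Cod C (Comp C g b) = Cod C (Comp C g f)" "Dom C (Comp C g f) = Dom C a" .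
  show ?thesis unfolding is_zero_def
    by (rule exI[of _ Z], rule exI[of _ a], rule exI[of _ "Comp C g b"]) (use X ab(1,2,3) in auto)
qed

lemma kernel_factor: "is_kernel C f k \<Longrightarrow> Cod C g = Dom C f \<Longrightarrow> is_zero C (Comp C f g) \<Longrightarrow>
  \<exists>u. Dom C u = Dom C g \<and> Cod C u = Dom C k \<and> Comp C k u = g"
  unfolding is_kernel_def by blast
lemma coker_factor: "is_cokernel C f c \<Longrightarrow> Dom C g = Cod C f \<Longrightarrow> is_zero C (Comp C g f) \<Longrightarrow>
  \<exists>u. Dom C u = Cod C c \<and> Cod C u = Cod C g \<and> Comp C u c = g"
  unfolding is_cokernel_def by blast

lemma kernel_mono: assumes c: "category C" and k: "is_kernel C f k" shows "mono C k"
  unfolding mono_def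
proof (intro allI impI)
  fix g1 g2 assume a: "Cod C g1 = Dom C k" "Cod C g2 = Dom C k" "Dom C g1 = Dom C g2"
    "Comp C k g1 = Comp C k g2"
  have kk: "Cod C k = Dom C f" "is_zero C (Comp C f k)" using k unfolding is_kernel_def by auto
  have "is_zero C (Comp C f (Comp C k g1))"
    using cat_assoc[OF c, of g1 k f] zero_right[OF c kk(2), of g1] a kk cat_dom[OF c, of k f] by simp
  moreover have "Cod C (Comp C k g1) = Dom C f" using cat_cod[OF c] a kk by simp
  ultimately have ex: "\<exists>!u. Dom C u = Dom C (Comp C k g1) \<and> Cod C u = Dom C k \<and> Comp C k u = Comp C k g1"
    using k unfolding is_kernel_def by blast
  have d1: "Dom C (Comp C k g1) = Dom C g1" "Dom C (Comp C k g2) = Dom C g2"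
    using a cat_dom[OF c, of g1 k] cat_dom[OF c, of g2 k] by auto
  have "Dom C g1 = Dom C (Comp C k g1) \<and> Cod C g1 = Dom C k \<and> Comp C k g1 = Comp C k g1"
    "Dom C g2 = Dom C (Comp C k g1) \<and> Cod C g2 = Dom C k \<and> Comp C k g2 = Comp C k g1"
    using d1 a by auto
  with ex show "g1 = g2" by blast
qed

lemma image_le_kernel: assumes c: "category C" and i: "is_image C f i" and k: "is_kernel C g k"
  and fg: "Cod C f = Dom C g" and z: "is_zero C (Comp C g f)"
  shows "sub_le C i k"
proof -
  obtain cc where cc: "is_cokernel C f cc" "is_kernel C cc i" using i unfolding is_image_def by blast
  obtain u where u: "Dom C u = Cod C cc" "Cod C u = Cod C g" "Comp C u cc = g"
    using coker_factor[OF cc(1), of g] fg z by auto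
  have ci: "Cod C i = Dom C cc" "is_zero C (Comp C cc i)" using cc(2) unfolding is_kernel_def by auto
  have "Comp C g i = Comp C u (Comp C cc i)" using cat_assoc[OF c, of i cc u] u ci by simp
  moreover have "Dom C u = Cod C (Comp C cc i)" using cat_cod[OF c] ci u by simp
  ultimately have gz: "is_zero C (Comp C g i)" using zero_left[OF c ci(2)] by simp
  have ci2: "Cod C i = Dom C g" using ci cc(1) fg unfolding is_cokernel_def by simp
  then obtain t where "Dom C t = Dom C i" "Cod C t = Dom C k" "Comp C k t = i"
    using kernel_factor[OF k] gz by blast
  moreover have "Cod C k = Cod C i" using k ci2 unfolding is_kernel_def by simp
  moreover have "mono C i" "mono C k" using kernel_mono[OF c] k cc(2) by auto
  ultimately show ?thesis unfolding sub_le_def by auto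
qed

lemma kernel_le: assumes c: "category C" and k: "is_kernel C f k" and k': "is_kernel C g k'"
  and "Dom C g = Dom C f" and z: "is_zero C (Comp C g k)"
  shows "sub_le C k k'"
proof -
  have "Cod C k = Dom C f" using k unfolding is_kernel_def by simp
  then obtain t where "Dom C t = Dom C k" "Cod C t = Dom C k'" "Comp C k' t = k"
    using kernel_factor[OF k'] z assms(4) by auto
  moreover have "Cod C k' = Cod C k" using k k' assms(4) unfolding is_kernel_def by simp
  moreover have "mono C k" "mono C k'" using kernel_mono[OF c] k k' by auto
  ultimately show ?thesis unfolding sub_le_def by auto
qed

lemma kernel_le_comp: assumes c: "category C" and k: "is_kernel C f k" and k': "is_kernel C (Comp C q f) k'"
  and fq: "Cod C f = Dom C q" shows "sub_le C k k'"
proof -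
  have kk: "Cod C k = Dom C f" "is_zero C (Comp C f k)" using k unfolding is_kernel_def by auto
  have "Comp C (Comp C q f) k = Comp C q (Comp C f k)" using cat_assoc[OF c, of k f q] kk fq by simp
  moreover have "Dom C q = Cod C (Comp C f k)" using cat_cod[OF c] kk fq by simp
  ultimately have "is_zero C (Comp C (Comp C q f) k)" using zero_left[OF c kk(2)] by simp
  thus ?thesis using kernel_le[OF c k k'] cat_dom[OF c] fq by simp
qed

lemma image_le_comp: assumes c: "category C" and i: "is_image C (Comp C f p) i'" and i2: "is_image C f i"
  and pf: "Cod C p = Dom C f" shows "sub_le C i' i"
proof -
  obtain cc where cc: "is_cokernel C f cc" "is_kernel C cc i" using i2 unfolding is_image_def by blast
  have z: "is_zero C (Comp C cc f)" "Dom C cc = Cod C f" using cc(1) unfolding is_cokernel_def by auto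
  have "Comp C cc (Comp C f p) = Comp C (Comp C cc f) p" using cat_assoc[OF c, of p f cc] z pf by simp
  moreover have "Cod C p = Dom C (Comp C cc f)" using cat_dom[OF c] z pf by simp
  ultimately have "is_zero C (Comp C cc (Comp C f p))" using zero_right[OF c z(1)] by simp
  moreover have "Cod C (Comp C f p) = Dom C cc" using cat_cod[OF c] z pf by simp
  ultimately show ?thesis using image_le_kernel[OF c i cc(2)] by simp
qed

lemma sub_le_trans: assumes c: "category C" "sub_le C a b" "sub_le C b d" shows "sub_le C a d"
proof -
  obtain u where u: "Dom C u = Dom C a" "Cod C u = Dom C b" "a = Comp C b u" using assms(2) unfolding sub_le_def by blast
  obtain w where w: "Dom C w = Dom C b" "Cod C w = Dom C d" "b = Comp C d w" using assms(3) unfolding sub_le_def by blast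
  have e: "Comp C b u = Comp C d (Comp C w u)" using cat_assoc[OF c(1), of u w d] u(2) w by simp
  have "Dom C (Comp C w u) = Dom C u" using cat_dom[OF c(1), of u w] u(2) w(1) by simp
  moreover have "Cod C (Comp C w u) = Cod C w" using cat_cod[OF c(1), of u w] u(2) w(1) by simp
  moreover have "mono C a" "mono C d" "Cod C a = Cod C d" using assms(2,3) unfolding sub_le_def by auto
  ultimately show ?thesis unfolding sub_le_def using u w e
    by (intro conjI exI[of _ "Comp C w u"]) auto
qed

lemma image_le_same: assumes c: "category C" and i: "is_image C f i" and i2: "is_image C f i'"
  shows "sub_le C i i'"
proof -
  obtain cc where cc: "is_cokernel C f cc" "is_kernel C cc i'" using i2 unfolding is_image_def by blast
  have z: "is_zero C (Comp C cc f)" "Dom C cc = Cod C f" using cc(1) unfolding is_cokernel_def by auto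
  show ?thesis using image_le_kernel[OF c i cc(2)] z by simp
qed

lemma kernel_le_same: assumes c: "category C" and k: "is_kernel C f k" and k2: "is_kernel C f k'"
  shows "sub_le C k k'"
  using kernel_le[OF c k k2] k unfolding is_kernel_def by simp

lemma image_ex: "abelian C \<Longrightarrow> \<exists>i. is_image C f i"
  unfolding abelian_def is_image_def by blast

lemma kernel_ex: "abelian C \<Longrightarrow> \<exists>k. is_kernel C f k"
  unfolding abelian_def by blast

lemma join_le: "is_join C a b j \<Longrightarrow> sub_le C a j \<and> sub_le C b j"
  unfolding is_join_def by blast
lemma meet_le: "is_meet C a b j \<Longrightarrow> sub_le C j a \<and> sub_le C j b"
  unfolding is_meet_def by blast
lemma join_least: "is_join C a b j \<Longrightarrow> sub_le C a d \<Longrightarrow> sub_le C b d \<Longrightarrow> sub_le C j d"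
  unfolding is_join_def by blast
lemma meet_greatest: "is_meet C a b j \<Longrightarrow> sub_le C d a \<Longrightarrow> sub_le C d b \<Longrightarrow> sub_le C d j"
  unfolding is_meet_def by blast



lemma dc_facts:
  assumes c: "category C" and dc: "double_complex C X h v"
  shows dh: "\<And>a b. Dom C (h a b) = X a b" "\<And>a b. Cod C (h a b) = X (a+1) b"
    and dv: "\<And>a b. Dom C (v a b) = X a b" "\<And>a b. Cod C (v a b) = X a (b+1)"
    and Z1: "is_zero C (Comp C (h i j) (h (i-1) j))"
    and Z6: "is_zero C (Comp C (v i j) (v i (j-1)))"
    and Z2: "is_zero C (Comp C (Comp C (v (i+1) j) (h i j)) (h (i-1) j))"
    and Z7: "is_zero C (Comp C (Comp C (v (i+1) j) (h i j)) (v i (j-1)))"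
    and Z3: "is_zero C (Comp C (h i j) (Comp C (v i (j-1)) (h (i-1) (j-1))))"
    and Z4: "is_zero C (Comp C (v i j) (Comp C (v i (j-1)) (h (i-1) (j-1))))"
    and Z5: "is_zero C (Comp C (Comp C (v (i+1) j) (h i j)) (Comp C (v i (j-1)) (h (i-1) (j-1))))"
    and comm1: "Comp C (v (i+1) j) (h i j) = Comp C (h i (j+1)) (v i j)"
    and comm2: "Comp C (v i (j-1)) (h (i-1) (j-1)) = Comp C (h (i-1) j) (v (i-1) (j-1))"
proof -
  have D: "\<And>a b. Dom C (h a b) = X a b \<and> Cod C (h a b) = X (a+1) b \<and>
     Dom C (v a b) = X a b \<and> Cod C (v a b) = X a (b+1) \<and>
     is_zero C (Comp C (h (a+1) b) (h a b)) \<and>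
     is_zero C (Comp C (v a (b+1)) (v a b)) \<and>
     Comp C (v (a+1) b) (h a b) = Comp C (h a (b+1)) (v a b)"
    using dc unfolding double_complex_def by blast
  show dh1: "\<And>a b. Dom C (h a b) = X a b" and dh2: "\<And>a b. Cod C (h a b) = X (a+1) b"
    and dv1: "\<And>a b. Dom C (v a b) = X a b" and dv2: "\<And>a b. Cod C (v a b) = X a (b+1)"
    using D by auto
  show z1: "is_zero C (Comp C (h i j) (h (i-1) j))" using D[of "i-1" j] by simp
  show z6: "is_zero C (Comp C (v i j) (v i (j-1)))" using D[of i "j-1"] by simp
  show cm1: "Comp C (v (i+1) j) (h i j) = Comp C (h i (j+1)) (v i j)" using D[of i j] by simp
  show cm2: "Comp C (v i (j-1)) (h (i-1) (j-1)) = Comp C (h (i-1) j) (v (i-1) (j-1))"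
    using D[of "i-1" "j-1"] by simp
  have a1: "Comp C (Comp C (v (i+1) j) (h i j)) (h (i-1) j) = Comp C (v (i+1) j) (Comp C (h i j) (h (i-1) j))"
    using cat_assoc[OF c, of "h (i-1) j" "h i j" "v (i+1) j"] dh1 dh2 dv1 by simp
  show z2: "is_zero C (Comp C (Comp C (v (i+1) j) (h i j)) (h (i-1) j))"
    unfolding a1 by (rule zero_left[OF c z1]) (simp add: cat_cod[OF c] dh1 dh2 dv1)
  have a2: "Comp C (Comp C (h i (j+1)) (v i j)) (v i (j-1)) = Comp C (h i (j+1)) (Comp C (v i j) (v i (j-1)))"
    using cat_assoc[OF c, of "v i (j-1)" "v i j" "h i (j+1)"] dh1 dv2 dv1 by simp
  show "is_zero C (Comp C (Comp C (v (i+1) j) (h i j)) (v i (j-1)))"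
    unfolding cm1 a2 by (rule zero_left[OF c z6]) (simp add: cat_cod[OF c] dh1 dv2 dv1)
  have hv: "Comp C (h i j) (v i (j-1)) = Comp C (v (i+1) (j-1)) (h i (j-1))" using D[of i "j-1"] by simp
  have a3: "Comp C (h i j) (Comp C (v i (j-1)) (h (i-1) (j-1))) = Comp C (Comp C (h i j) (v i (j-1))) (h (i-1) (j-1))"
    using cat_assoc[OF c, of "h (i-1) (j-1)" "v i (j-1)" "h i j"] dh1 dh2 dv1 dv2 by simp
  have a4: "Comp C (Comp C (v (i+1) (j-1)) (h i (j-1))) (h (i-1) (j-1)) = Comp C (v (i+1) (j-1)) (Comp C (h i (j-1)) (h (i-1) (j-1)))"
    using cat_assoc[OF c, of "h (i-1) (j-1)" "h i (j-1)" "v (i+1) (j-1)"] dh1 dh2 dv1 by simp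
  have z0: "is_zero C (Comp C (h i (j-1)) (h (i-1) (j-1)))" using D[of "i-1" "j-1"] by simp
  show z3: "is_zero C (Comp C (h i j) (Comp C (v i (j-1)) (h (i-1) (j-1))))"
    unfolding a3 hv a4 by (rule zero_left[OF c z0]) (simp add: cat_cod[OF c] dh1 dh2 dv1)
  have a5: "Comp C (v i j) (Comp C (v i (j-1)) (h (i-1) (j-1))) = Comp C (Comp C (v i j) (v i (j-1))) (h (i-1) (j-1))"
    using cat_assoc[OF c, of "h (i-1) (j-1)" "v i (j-1)" "v i j"] dh1 dh2 dv1 dv2 by simp
  show "is_zero C (Comp C (v i j) (Comp C (v i (j-1)) (h (i-1) (j-1))))"
    unfolding a5 by (rule zero_right[OF c z6]) (simp add: cat_dom[OF c] dh1 dh2 dv1 dv2)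
  have a6: "Comp C (Comp C (v (i+1) j) (h i j)) (Comp C (v i (j-1)) (h (i-1) (j-1))) = Comp C (v (i+1) j) (Comp C (h i j) (Comp C (v i (j-1)) (h (i-1) (j-1))))"
    by (rule sym, rule cat_assoc[OF c]) (simp_all add: cat_cod[OF c] dh1 dh2 dv1 dv2)
  show "is_zero C (Comp C (Comp C (v (i+1) j) (h i j)) (Comp C (v i (j-1)) (h (i-1) (j-1))))"
    unfolding a6 by (rule zero_left[OF c z3]) (simp add: cat_cod[OF c] dh1 dh2 dv1 dv2)
qed



theorem corollary4p3:
  fixes C :: "('o, 'm) cat"
    and X :: "int \<Rightarrow> int \<Rightarrow> 'o"
    and h v :: "int \<Rightarrow> int \<Rightarrow> 'm"
    and i j :: int
  assumes "abelian C"
    and "double_complex C X h v"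
  shows
    "((L_trivial C (Kh C h v i j) (Meet_set C (Ih C h v i j) (Iv C h v i j)) \<or>
      L_trivial C (Kh C h v i j) (Idg C h v i j) \<or>
      L_trivial C (Join_set C (Kh C h v i j) (Kv C h v i j)) (Idg C h v i j) \<or>
      L_trivial C (Join_set C (Kh C h v i j) (Kv C h v i j)) (Ih C h v i j) \<or>
      L_trivial C (Kd C h v i j) (Ih C h v i j) \<or>
      L_trivial C (Kd C h v i j) (Meet_set C (Ih C h v i j) (Iv C h v i j)) \<or>
      L_trivial C (Kd C h v i j) (Idg C h v i j))
     \<longrightarrow> L_trivial C (Kh C h v i j) (Ih C h v i j)) \<and>
    ((L_trivial C (Kv C h v i j) (Meet_set C (Ih C h v i j) (Iv C h v i j)) \<or>
      L_trivial C (Kv C h v i j) (Idg C h v i j) \<or>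
      L_trivial C (Join_set C (Kh C h v i j) (Kv C h v i j)) (Idg C h v i j) \<or>
      L_trivial C (Join_set C (Kh C h v i j) (Kv C h v i j)) (Iv C h v i j) \<or>
      L_trivial C (Kd C h v i j) (Iv C h v i j) \<or>
      L_trivial C (Kd C h v i j) (Meet_set C (Ih C h v i j) (Iv C h v i j)) \<or>
      L_trivial C (Kd C h v i j) (Idg C h v i j))
     \<longrightarrow> L_trivial C (Kv C h v i j) (Iv C h v i j)) \<and>
    (L_trivial C (Kd C h v i j) (Idg C h v i j) \<longrightarrow>
       (\<forall>U V. L_homology C h v i j U V \<longrightarrow> sub_eq C U V))"
proof -
  have c: "category C" using assms(1) unfolding abelian_def by blast
  note F0 = dc_facts[OF c assms(2)]
  note F = F0(1-4) F0(5-13)[where i=i and j=j]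
  note S = F(1-4) cat_dom[OF c] cat_cod[OF c] Kh_def Kv_def Kd_def Ih_def Iv_def Idg_def Im_set_def Ker_set_def
  let ?KH = "Kh C h v i j" and ?KV = "Kv C h v i j" and ?KD = "Kd C h v i j"
  let ?IH = "Ih C h v i j" and ?IV = "Iv C h v i j" and ?ID = "Idg C h v i j"
  note T = sub_le_trans[OF c]
  have LIhKh: "\<And>a k. a \<in> ?IH \<Longrightarrow> k \<in> ?KH \<Longrightarrow> sub_le C a k"
    by (rule image_le_kernel[OF c _ _ _ F(5)]) (simp_all add: S)
  have LIvKv: "\<And>a k. a \<in> ?IV \<Longrightarrow> k \<in> ?KV \<Longrightarrow> sub_le C a k"
    by (rule image_le_kernel[OF c _ _ _ F(6)]) (simp_all add: S)
  have LIhKd: "\<And>a k. a \<in> ?IH \<Longrightarrow> k \<in> ?KD \<Longrightarrow> sub_le C a k"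
    by (rule image_le_kernel[OF c _ _ _ F(7)]) (simp_all add: S)
  have LIvKd: "\<And>a k. a \<in> ?IV \<Longrightarrow> k \<in> ?KD \<Longrightarrow> sub_le C a k"
    by (rule image_le_kernel[OF c _ _ _ F(8)]) (simp_all add: S)
  have LIdKh: "\<And>a k. a \<in> ?ID \<Longrightarrow> k \<in> ?KH \<Longrightarrow> sub_le C a k"
    by (rule image_le_kernel[OF c _ _ _ F(9)]) (simp_all add: S)
  have LIdKv: "\<And>a k. a \<in> ?ID \<Longrightarrow> k \<in> ?KV \<Longrightarrow> sub_le C a k"
    by (rule image_le_kernel[OF c _ _ _ F(10)]) (simp_all add: S)
  have LIdKd: "\<And>a k. a \<in> ?ID \<Longrightarrow> k \<in> ?KD \<Longrightarrow> sub_le C a k"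
    by (rule image_le_kernel[OF c _ _ _ F(11)]) (simp_all add: S)
  have KhKd: "\<And>k k'. k \<in> ?KH \<Longrightarrow> k' \<in> ?KD \<Longrightarrow> sub_le C k k'"
    by (rule kernel_le_comp[OF c, where f="h i j" and q="v (i+1) j"]) (simp_all add: S)
  have KvKd: "\<And>k k'. k \<in> ?KV \<Longrightarrow> k' \<in> ?KD \<Longrightarrow> sub_le C k k'"
    unfolding Kd_def F(12) by (rule kernel_le_comp[OF c, where f="v i j" and q="h i (j+1)"]) (simp_all add: S)
  have KdKd: "\<And>k k'. k \<in> ?KD \<Longrightarrow> k' \<in> ?KD \<Longrightarrow> sub_le C k k'"
    by (rule kernel_le_same[OF c, where f="Comp C (v (i+1) j) (h i j)"]) (simp_all add: S)
  have IdIh: "\<And>a k. a \<in> ?ID \<Longrightarrow> k \<in> ?IH \<Longrightarrow> sub_le C a k"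
    unfolding Idg_def F(13) by (rule image_le_comp[OF c, where f="h (i-1) j" and p="v (i-1) (j-1)"]) (simp_all add: S)
  have IdIv: "\<And>a k. a \<in> ?ID \<Longrightarrow> k \<in> ?IV \<Longrightarrow> sub_le C a k"
    by (rule image_le_comp[OF c, where f="v i (j-1)" and p="h (i-1) (j-1)"]) (simp_all add: S)
  have IdId: "\<And>a k. a \<in> ?ID \<Longrightarrow> k \<in> ?ID \<Longrightarrow> sub_le C a k"
    by (rule image_le_same[OF c, where f="Comp C (v i (j-1)) (h (i-1) (j-1))"]) (simp_all add: S)
  obtain kh0 where kh0: "kh0 \<in> ?KH" using kernel_ex[OF assms(1)] by (auto simp: S)
  obtain kv0 where kv0: "kv0 \<in> ?KV" using kernel_ex[OF assms(1)] by (auto simp: S)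
  obtain ih0 where ih0: "ih0 \<in> ?IH" using image_ex[OF assms(1)] by (auto simp: S)
  obtain iv0 where iv0: "iv0 \<in> ?IV" using image_ex[OF assms(1)] by (auto simp: S)
  have triv_h: "L_trivial C ?KH ?IH" if "\<exists>k\<in>?KH. \<exists>a\<in>?IH. sub_le C k a"
    using that LIhKh unfolding L_trivial_def sub_eq_def by blast
  have triv_v: "L_trivial C ?KV ?IV" if "\<exists>k\<in>?KV. \<exists>a\<in>?IV. sub_le C k a"
    using that LIvKv unfolding L_trivial_def sub_eq_def by blast
  have PA: "(L_trivial C ?KH (Meet_set C ?IH ?IV) \<or> L_trivial C ?KH ?ID \<or>
      L_trivial C (Join_set C ?KH ?KV) ?ID \<or> L_trivial C (Join_set C ?KH ?KV) ?IH \<or>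
      L_trivial C ?KD ?IH \<or> L_trivial C ?KD (Meet_set C ?IH ?IV) \<or> L_trivial C ?KD ?ID)
     \<longrightarrow> L_trivial C ?KH ?IH" (is "?P \<longrightarrow> _")
  proof (rule impI)
    assume H: ?P
    have "\<exists>k\<in>?KH. \<exists>a\<in>?IH. sub_le C k a" using H
  proof (elim disjE)
    assume "L_trivial C ?KH (Meet_set C ?IH ?IV)"
    then obtain u m a b where u: "u \<in> ?KH" and ab: "a \<in> ?IH" and mt: "is_meet C a b m" and um: "sub_le C u m"
      unfolding L_trivial_def Meet_set_def sub_eq_def by blast
    have "sub_le C m a" using conjunct1[OF meet_le[OF mt]] .
    with T[OF um] have "sub_le C u a" by blast
    with u ab show ?thesis by blast
  next
    assume "L_trivial C ?KH ?ID"
    then obtain u w where u: "u \<in> ?KH" and w: "w \<in> ?ID" and uw: "sub_le C u w"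
      unfolding L_trivial_def sub_eq_def by blast
    have "sub_le C u ih0" using T[OF uw IdIh[OF w ih0]] .
    with u ih0 show ?thesis by blast
  next
    assume "L_trivial C (Join_set C ?KH ?KV) ?ID"
    then obtain jj k1 k2 w where k: "k1 \<in> ?KH" and jt: "is_join C k1 k2 jj" and w: "w \<in> ?ID" and jw: "sub_le C jj w"
      unfolding L_trivial_def Join_set_def sub_eq_def by blast
    have "sub_le C k1 jj" using conjunct1[OF join_le[OF jt]] .
    then have "sub_le C k1 w" using T jw by blast
    then have "sub_le C k1 ih0" using T IdIh[OF w ih0] by blast
    with k ih0 show ?thesis by blast
  next
    assume "L_trivial C (Join_set C ?KH ?KV) ?IH"
    then obtain jj k1 k2 w where k: "k1 \<in> ?KH" and jt: "is_join C k1 k2 jj" and w: "w \<in> ?IH" and jw: "sub_le C jj w"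
      unfolding L_trivial_def Join_set_def sub_eq_def by blast
    have "sub_le C k1 jj" using conjunct1[OF join_le[OF jt]] .
    then have "sub_le C k1 w" using T jw by blast
    with k w show ?thesis by blast
  next
    assume "L_trivial C ?KD ?IH"
    then obtain u w where u: "u \<in> ?KD" and w: "w \<in> ?IH" and uw: "sub_le C u w"
      unfolding L_trivial_def sub_eq_def by blast
    have "sub_le C kh0 w" using T[OF KhKd[OF kh0 u] uw] .
    with kh0 w show ?thesis by blast
  next
    assume "L_trivial C ?KD (Meet_set C ?IH ?IV)"
    then obtain u m a b where u: "u \<in> ?KD" and ab: "a \<in> ?IH" and mt: "is_meet C a b m" and um: "sub_le C u m"
      unfolding L_trivial_def Meet_set_def sub_eq_def by blast
    have "sub_le C m a" using conjunct1[OF meet_le[OF mt]] .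
    with T[OF um] have "sub_le C u a" by blast
    then have "sub_le C kh0 a" using T[OF KhKd[OF kh0 u]] by blast
    with kh0 ab show ?thesis by blast
  next
    assume "L_trivial C ?KD ?ID"
    then obtain u w where u: "u \<in> ?KD" and w: "w \<in> ?ID" and uw: "sub_le C u w"
      unfolding L_trivial_def sub_eq_def by blast
    have "sub_le C kh0 w" using T[OF KhKd[OF kh0 u] uw] .
    then have "sub_le C kh0 ih0" using T IdIh[OF w ih0] by blast
    with kh0 ih0 show ?thesis by blast
  qed
  then show "L_trivial C ?KH ?IH" by (rule triv_h)
  qed
  have PB: "(L_trivial C ?KV (Meet_set C ?IH ?IV) \<or> L_trivial C ?KV ?ID \<or>
      L_trivial C (Join_set C ?KH ?KV) ?ID \<or> L_trivial C (Join_set C ?KH ?KV) ?IV \<or>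
      L_trivial C ?KD ?IV \<or> L_trivial C ?KD (Meet_set C ?IH ?IV) \<or> L_trivial C ?KD ?ID)
     \<longrightarrow> L_trivial C ?KV ?IV" (is "?P \<longrightarrow> _")
  proof (rule impI)
    assume H: ?P
    have "\<exists>k\<in>?KV. \<exists>a\<in>?IV. sub_le C k a" using H
  proof (elim disjE)
    assume "L_trivial C ?KV (Meet_set C ?IH ?IV)"
    then obtain u m a b where u: "u \<in> ?KV" and ab: "b \<in> ?IV" and mt: "is_meet C a b m" and um: "sub_le C u m"
      unfolding L_trivial_def Meet_set_def sub_eq_def by blast
    have "sub_le C m b" using conjunct2[OF meet_le[OF mt]] .
    with T[OF um] have "sub_le C u b" by blast
    with u ab show ?thesis by blast
  next
    assume "L_trivial C ?KV ?ID"
    then obtain u w where u: "u \<in> ?KV" and w: "w \<in> ?ID" and uw: "sub_le C u w"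
      unfolding L_trivial_def sub_eq_def by blast
    have "sub_le C u iv0" using T[OF uw IdIv[OF w iv0]] .
    with u iv0 show ?thesis by blast
  next
    assume "L_trivial C (Join_set C ?KH ?KV) ?ID"
    then obtain jj k1 k2 w where k: "k2 \<in> ?KV" and jt: "is_join C k1 k2 jj" and w: "w \<in> ?ID" and jw: "sub_le C jj w"
      unfolding L_trivial_def Join_set_def sub_eq_def by blast
    have "sub_le C k2 jj" using conjunct2[OF join_le[OF jt]] .
    then have "sub_le C k2 w" using T jw by blast
    then have "sub_le C k2 iv0" using T IdIv[OF w iv0] by blast
    with k iv0 show ?thesis by blast
  next
    assume "L_trivial C (Join_set C ?KH ?KV) ?IV"
    then obtain jj k1 k2 w where k: "k2 \<in> ?KV" and jt: "is_join C k1 k2 jj" and w: "w \<in> ?IV" and jw: "sub_le C jj w"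
      unfolding L_trivial_def Join_set_def sub_eq_def by blast
    have "sub_le C k2 jj" using conjunct2[OF join_le[OF jt]] .
    then have "sub_le C k2 w" using T jw by blast
    with k w show ?thesis by blast
  next
    assume "L_trivial C ?KD ?IV"
    then obtain u w where u: "u \<in> ?KD" and w: "w \<in> ?IV" and uw: "sub_le C u w"
      unfolding L_trivial_def sub_eq_def by blast
    have "sub_le C kv0 w" using T[OF KvKd[OF kv0 u] uw] .
    with kv0 w show ?thesis by blast
  next
    assume "L_trivial C ?KD (Meet_set C ?IH ?IV)"
    then obtain u m a b where u: "u \<in> ?KD" and ab: "b \<in> ?IV" and mt: "is_meet C a b m" and um: "sub_le C u m"
      unfolding L_trivial_def Meet_set_def sub_eq_def by blast
    have "sub_le C m b" using conjunct2[OF meet_le[OF mt]] .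
    with T[OF um] have "sub_le C u b" by blast
    then have "sub_le C kv0 b" using T[OF KvKd[OF kv0 u]] by blast
    with kv0 ab show ?thesis by blast
  next
    assume "L_trivial C ?KD ?ID"
    then obtain u w where u: "u \<in> ?KD" and w: "w \<in> ?ID" and uw: "sub_le C u w"
      unfolding L_trivial_def sub_eq_def by blast
    have "sub_le C kv0 w" using T[OF KvKd[OF kv0 u] uw] .
    then have "sub_le C kv0 iv0" using T IdIv[OF w iv0] by blast
    with kv0 iv0 show ?thesis by blast
  qed
  then show "L_trivial C ?KV ?IV" by (rule triv_v)
  qed
  have PC: "L_trivial C ?KD ?ID \<longrightarrow> (\<forall>U V. L_homology C h v i j U V \<longrightarrow> sub_eq C U V)"
  proof (intro impI allI)
    fix U V
    assume "L_trivial C ?KD ?ID" and LH: "L_homology C h v i j U V"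
    then obtain u w where u: "u \<in> ?KD" and w: "w \<in> ?ID" and uw: "sub_le C u w"
      unfolding L_trivial_def sub_eq_def by blast
    have K: "sub_le C w U \<and> sub_le C U u" if "U \<in> sublat C (?KH \<union> ?KV \<union> ?KD)" for U
      using that
    proof (induction rule: sublat.induct)
      case (gen a)
      then show ?case using LIdKh[OF w] LIdKv[OF w] LIdKd[OF w] KhKd[OF _ u] KvKd[OF _ u] KdKd[OF _ u] by blast
    next
      case (join a b c)
      have 1: "sub_le C a c" "sub_le C b c" using join_le[OF join.hyps(3)] by auto
      have "sub_le C w c" using T[OF conjunct1[OF join.IH(1)] 1(1)] .
      moreover have "sub_le C c u" using join_least[OF join.hyps(3) conjunct2[OF join.IH(1)] conjunct2[OF join.IH(2)]] .
      ultimately show ?case by blast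
    next
      case (meet a b c)
      have 1: "sub_le C c a" "sub_le C c b" using meet_le[OF meet.hyps(3)] by auto
      have "sub_le C c u" using T[OF 1(1) conjunct2[OF meet.IH(1)]] .
      moreover have "sub_le C w c" using meet_greatest[OF meet.hyps(3) conjunct1[OF meet.IH(1)] conjunct1[OF meet.IH(2)]] .
      ultimately show ?case by blast
    qed
    have I: "sub_le C w V \<and> sub_le C V u" if "V \<in> sublat C (?IH \<union> ?IV \<union> ?ID)" for V
      using that
    proof (induction rule: sublat.induct)
      case (gen a)
      then show ?case using IdIh[OF w] IdIv[OF w] IdId[OF w] LIhKd[OF _ u] LIvKd[OF _ u] LIdKd[OF _ u] by blast
    next
      case (join a b c)
      have 1: "sub_le C a c" "sub_le C b c" using join_le[OF join.hyps(3)] by auto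
      have "sub_le C w c" using T[OF conjunct1[OF join.IH(1)] 1(1)] .
      moreover have "sub_le C c u" using join_least[OF join.hyps(3) conjunct2[OF join.IH(1)] conjunct2[OF join.IH(2)]] .
      ultimately show ?case by blast
    next
      case (meet a b c)
      have 1: "sub_le C c a" "sub_le C c b" using meet_le[OF meet.hyps(3)] by auto
      have "sub_le C c u" using T[OF 1(1) conjunct2[OF meet.IH(1)]] .
      moreover have "sub_le C w c" using meet_greatest[OF meet.hyps(3) conjunct1[OF meet.IH(1)] conjunct1[OF meet.IH(2)]] .
      ultimately show ?case by blast
    qed
    have U: "U \<in> sublat C (?KH \<union> ?KV \<union> ?KD)" and V: "V \<in> sublat C (?IH \<union> ?IV \<union> ?ID)"
      and VU: "sub_le C V U" using LH unfolding L_homology_def by auto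
    have "sub_le C U w" using T[OF conjunct2[OF K[OF U]] uw] .
    then have "sub_le C U V" using T[OF _ conjunct1[OF I[OF V]]] by blast
    then show "sub_eq C U V" using VU unfolding sub_eq_def by blast
  qed
  show ?thesis using PA PB PC by blast
qed


end
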